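(* Let $n$ be a nonnegative integer and $\delta\in\{1,2\}$. Suppose there exist a nonnegative integer $B$ and integers $x,y,z$ such that $$\frac{2n+(3\delta+4)B}{3}-(3\delta+4)B^2=x^2+2y^2+3\delta z^2+(x+2y+3\delta z)^2<(B+1)^2.$$ Then there exist nonnegative integers $w_0,x_0,y_0,z_0$ with $n=p_5(w_0)+p_5(x_0)+2p_5(y_0)+3\delta\, p_5(z_0)$.
   Context: For $k\in\mathbb{Z}$, $p_5(k)=k(3k-1)/2$. *)

theory Defs
  imports Complex_Main
begin

definition p5 :: "int \<Rightarrow> int" where
  "p5 k = k * (3 * k - 1) div 2"

end

theory Submission
  imports Defs
begin

lemma p5_2: "2 * p5 k = k * (3 * k - 1)"
proof -
  have "even (k * (3 * k - 1))" by auto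
  then show ?thesis unfolding p5_def by simp
qed

lemma sq_bound:
  fixes a B :: int
  assumes "a^2 < (B+1)^2" "B \<ge> 0"
  shows "-a \<le> B \<and> a \<le> B"
proof -
  have "\<bar>a\<bar>^2 < (B+1)^2" using assms by simp
  then have "\<bar>a\<bar> < B+1" using power_less_imp_less_base assms(2) by fastforce
  then show ?thesis by auto
qed

theorem lemma4p2:
  fixes n :: int and \<delta> :: int and B x y z :: int
  assumes "n \<ge> 0"
    and "\<delta> \<in> {1, 2}"
    and "B \<ge> 0"
    and "(2 * of_int n + (3 * of_int \<delta> + 4) * of_int B) / 3 - (3 * of_int \<delta> + 4) * (of_int B)^2
           = (of_int (x^2 + 2 * y^2 + 3 * \<delta> * z^2 + (x + 2 * y + 3 * \<delta> * z)^2) :: real)"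
    and "x^2 + 2 * y^2 + 3 * \<delta> * z^2 + (x + 2 * y + 3 * \<delta> * z)^2 < (B + 1)^2"
  shows "\<exists>w0 x0 y0 z0 :: int. w0 \<ge> 0 \<and> x0 \<ge> 0 \<and> y0 \<ge> 0 \<and> z0 \<ge> 0 \<and>
           n = p5 w0 + p5 x0 + 2 * p5 y0 + 3 * \<delta> * p5 z0"
proof -
  define s where "s = x + 2 * y + 3 * \<delta> * z"
  define Q where "Q = x^2 + 2 * y^2 + 3 * \<delta> * z^2 + s^2"
  have dpos: "\<delta> > 0" using assms(2) by auto
  have "real_of_int (2 * n + (3 * \<delta> + 4) * B - 3 * (3 * \<delta> + 4) * B^2) = real_of_int (3 * Q)"
    using assms(4) unfolding Q_def s_def by (simp add: field_simps)
  then have eq: "2 * n + (3 * \<delta> + 4) * B - 3 * (3 * \<delta> + 4) * B^2 = 3 * Q" by linarith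
  have lt: "Q < (B+1)^2" using assms(5) unfolding Q_def s_def by simp
  have nn: "x^2 \<ge> 0" "y^2 \<ge> 0" "z^2 \<ge> 0" "s^2 \<ge> 0" by auto
  have "3 * \<delta> * z^2 \<ge> z^2" using mult_left_mono[of 1 "3*\<delta>" "z^2"] dpos nn(3) by (simp add: mult.commute)
  then have bz: "z^2 < (B+1)^2" using lt nn \<open>3 * \<delta> * z^2 \<ge> z^2\<close> unfolding Q_def by linarith
  have bx: "x^2 < (B+1)^2" using lt nn \<open>3 * \<delta> * z^2 \<ge> z^2\<close> unfolding Q_def by linarith
  have by': "y^2 < (B+1)^2" using lt nn \<open>3 * \<delta> * z^2 \<ge> z^2\<close> unfolding Q_def by linarith
  have bs: "s^2 < (B+1)^2" using lt nn \<open>3 * \<delta> * z^2 \<ge> z^2\<close> unfolding Q_def by linarith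
  note b = sq_bound[OF bx assms(3)] sq_bound[OF by' assms(3)] sq_bound[OF bz assms(3)] sq_bound[OF bs assms(3)]
  have "2 * n = (B-s)*(3*(B-s)-1) + (B+x)*(3*(B+x)-1) + 2*((B+y)*(3*(B+y)-1)) + 3*\<delta>*((B+z)*(3*(B+z)-1))"
    using eq unfolding Q_def s_def by (simp add: algebra_simps power2_eq_square)
  also have "\<dots> = 2*p5(B-s) + 2*p5(B+x) + 2*(2*p5(B+y)) + 3*\<delta>*(2*p5(B+z))"
    by (simp only: p5_2)
  also have "\<dots> = 2 * (p5 (B - s) + p5 (B + x) + 2 * p5 (B + y) + 3 * \<delta> * p5 (B + z))"
    by (simp add: algebra_simps)
  finally have "2 * n = 2 * (p5 (B - s) + p5 (B + x) + 2 * p5 (B + y) + 3 * \<delta> * p5 (B + z))" .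
  then have "n = p5 (B - s) + p5 (B + x) + 2 * p5 (B + y) + 3 * \<delta> * p5 (B + z)" by simp
  moreover have "B - s \<ge> 0" "B + x \<ge> 0" "B + y \<ge> 0" "B + z \<ge> 0" using b by auto
  ultimately show ?thesis by blast
qed

end
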